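(* Let $\Omega\subseteq\mathbb{R}^d$ be a convex compact set, and for $t\in\mathbb{R}$ let $\Omega_t=\{x\in\mathbb{R}^{d-1}:(x,t)\in\Omega\}$. Let $\eta>\max_{t\in\mathbb{R}}|\Omega_t|$ and let $\Lambda\subseteq\mathbb{R}^{d-1}$ be an $\eta$-universal sampling set. Then there exist $0<A\le B<\infty$ such that for every $t\in\mathbb{R}$, $\Lambda$ is a set of stable sampling for $\mathcal{B}_{\Omega_t}$ with bounds $A,B$.
   Context: $|\Omega_t|$ is $(d-1)$-dimensional Lebesgue measure. Fourier transform on $\mathbb{R}^n$: $\widehat f(\omega)=\int f(r)e^{-2\pi i\langle\omega,r\rangle}dr$; for closed $S\subseteq\mathbb{R}^n$, $\mathcal{B}_S=\{f\in L^2(\mathbb{R}^n):\widehat f=0\text{ a.e. outside }S\}$. $\Lambda$ is a set of stable sampling for $\mathcal{B}_S$ with bounds $A,B$ if $A\|f\|_2^2\le\sum_{\lambda\in\Lambda}|f(\lambda)|^2\le B\|f\|_2^2$ for all $f\in\mathcal{B}_S$. Beurling densities of $\Lambda\subseteq\mathbb{R}^n$: $D^-(\Lambda)=\liminf_{a\to\infty}\inf_x\#(\Lambda\cap B_a^n(x))/|B_a^n|$, $D^+(\Lambda)=\limsup_{a\to\infty}\sup_x\#(\Lambda\cap B_a^n(x))/|B_a^n|$. Given $\eta>0$, an $\eta$-universal sampling set in $\mathbb{R}^n$ is a set $\Lambda$ with uniform density $D^-(\Lambda)=D^+(\Lambda)=\eta$ that is a set of stable sampling for $\mathcal{B}_S$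 for every compact $S\subseteq\mathbb{R}^n$ with $|S|<\eta$ (the bounds may depend on $S$). *)

theory Defs
  imports "HOL-Analysis.Analysis"
begin

definition L2 :: "('a::euclidean_space \<Rightarrow> complex) \<Rightarrow> bool" where
  "L2 f \<longleftrightarrow> f \<in> borel_measurable lebesgue \<and>
     integrable lebesgue (\<lambda>x. (cmod (f x))\<^sup>2)"

definition L2_norm_sq :: "('a::euclidean_space \<Rightarrow> complex) \<Rightarrow> real" where
  "L2_norm_sq f = integral\<^sup>L lebesgue (\<lambda>x. (cmod (f x))\<^sup>2)"

definition fourier_int :: "('a::euclidean_space \<Rightarrow> complex) \<Rightarrow> 'a \<Rightarrow> complex" where
  "fourier_int h w = integral\<^sup>L lebesgue (\<lambda>r. h r * cis (- 2 * pi * (w \<bullet> r)))"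

definition is_fourier_L2 :: "('a::euclidean_space \<Rightarrow> complex) \<Rightarrow> ('a \<Rightarrow> complex) \<Rightarrow> bool" where
  "is_fourier_L2 f g \<longleftrightarrow> L2 g \<and>
     ((\<lambda>R::real. \<integral>\<^sup>+ w. ennreal ((cmod (g w -
         fourier_int (\<lambda>r. f r * indicator (ball 0 R) r) w))\<^sup>2) \<partial>lebesgue)
       \<longlongrightarrow> 0) at_top"

text \<open>Paley--Wiener space B_S. Elements are L2 classes; since point values are
  sampled, each class is represented by its continuous representative (which
  exists for compact S).\<close>
definition PW_space :: "'a::euclidean_space set \<Rightarrow> ('a \<Rightarrow> complex) set" where
  "PW_space S = {f. L2 f \<and> continuous_on UNIV f \<and>
     (\<exists>g. is_fourier_L2 f g \<and> (AE w in lebesgue. w \<notin> S \<longrightarrow> g w = 0))}"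

definition sample_energy :: "'a set \<Rightarrow> ('a \<Rightarrow> complex) \<Rightarrow> ennreal" where
  "sample_energy \<Lambda> f = (\<integral>\<^sup>+ l. ennreal ((cmod (f l))\<^sup>2) \<partial>count_space \<Lambda>)"

definition stable_sampling_bounds ::
  "'a::euclidean_space set \<Rightarrow> 'a set \<Rightarrow> real \<Rightarrow> real \<Rightarrow> bool" where
  "stable_sampling_bounds \<Lambda> S A B \<longleftrightarrow>
     (\<forall>f \<in> PW_space S.
        ennreal (A * L2_norm_sq f) \<le> sample_energy \<Lambda> f \<and>
        sample_energy \<Lambda> f \<le> ennreal (B * L2_norm_sq f))"

definition stable_sampling :: "'a::euclidean_space set \<Rightarrow> 'a set \<Rightarrow> bool" where
  "stable_sampling \<Lambda> S \<longleftrightarrow> (\<exists>A B. 0 < A \<and> A \<le> B \<and> stable_sampling_bounds \<Lambda> S A B)"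

definition npts :: "'a::euclidean_space set \<Rightarrow> 'a \<Rightarrow> real \<Rightarrow> ereal" where
  "npts \<Lambda> x a = (if finite (\<Lambda> \<inter> ball x a) then ereal (real (card (\<Lambda> \<inter> ball x a))) else \<infinity>)"

definition lower_density :: "'a::euclidean_space set \<Rightarrow> ereal" where
  "lower_density \<Lambda> = Liminf at_top
     (\<lambda>a::real. INF x. npts \<Lambda> x a / ereal (measure lebesgue (ball (0::'a) a)))"

definition upper_density :: "'a::euclidean_space set \<Rightarrow> ereal" where
  "upper_density \<Lambda> = Limsup at_top
     (\<lambda>a::real. SUP x. npts \<Lambda> x a / ereal (measure lebesgue (ball (0::'a) a)))"

definition universal_sampling :: "real \<Rightarrow> 'a::euclidean_space set \<Rightarrow> bool" where
  "universal_sampling \<eta> \<Lambda> \<longleftrightarrow>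
     lower_density \<Lambda> = ereal \<eta> \<and> upper_density \<Lambda> = ereal \<eta> \<and>
     (\<forall>S. compact S \<and> measure lebesgue S < \<eta> \<longrightarrow> stable_sampling \<Lambda> S)"

definition hsection :: "('a \<times> real) set \<Rightarrow> real \<Rightarrow> 'a set" where
  "hsection \<Omega> t = {x. (x, t) \<in> \<Omega>}"

end

theory Submission
  imports Defs
begin

lemma PW_mono: "S \<subseteq> T \<Longrightarrow> PW_space S \<subseteq> PW_space T"
  unfolding PW_space_def by (auto elim!: eventually_mono)

lemma L2_norm_sq_nonneg: "0 \<le> L2_norm_sq f"
  unfolding L2_norm_sq_def by simp

lemma ssb_mono:
  assumes "stable_sampling_bounds \<Lambda> T A B" "S \<subseteq> T" "0 \<le> A'" "A' \<le> A" "B \<le> B'"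
  shows "stable_sampling_bounds \<Lambda> S A' B'"
  unfolding stable_sampling_bounds_def
proof
  fix f assume f: "f \<in> PW_space S"
  hence "f \<in> PW_space T" using PW_mono[OF assms(2)] by blast
  hence h: "ennreal (A * L2_norm_sq f) \<le> sample_energy \<Lambda> f"
    "sample_energy \<Lambda> f \<le> ennreal (B * L2_norm_sq f)"
    using assms(1) unfolding stable_sampling_bounds_def by auto
  have n: "0 \<le> L2_norm_sq f" by (rule L2_norm_sq_nonneg)
  have "ennreal (A' * L2_norm_sq f) \<le> ennreal (A * L2_norm_sq f)"
    using n assms(4) by (intro ennreal_leI mult_right_mono) auto
  moreover have "ennreal (B * L2_norm_sq f) \<le> ennreal (B' * L2_norm_sq f)"
    using n assms(5) by (intro ennreal_leI mult_right_mono) auto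
  ultimately show "ennreal (A' * L2_norm_sq f) \<le> sample_energy \<Lambda> f \<and>
        sample_energy \<Lambda> f \<le> ennreal (B' * L2_norm_sq f)" using h by (meson order_trans)
qed

lemma hsection_compact:
  fixes \<Omega> :: "('a::euclidean_space \<times> real) set"
  assumes "compact \<Omega>" shows "compact (hsection \<Omega> t)"
proof -
  have "hsection \<Omega> t = (\<lambda>x. (x,t)) -` \<Omega>" unfolding hsection_def by auto
  moreover have "closed ((\<lambda>x. (x,t)) -` \<Omega>)"
    by (rule continuous_closed_vimage) (auto intro: compact_imp_closed assms continuous_intros)
  ultimately have "closed (hsection \<Omega> t)" by simp
  moreover have "hsection \<Omega> t \<subseteq> fst ` \<Omega>" unfolding hsection_def by force
  moreover have "bounded (fst ` \<Omega>)" using assms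
    by (simp add: compact_imp_bounded bounded_linear_image bounded_linear_fst)
  ultimately show ?thesis by (meson bounded_subset compact_eq_bounded_closed)
qed

lemma local_cover:
  fixes \<Omega> :: "('a::euclidean_space \<times> real) set"
  assumes cpt: "compact \<Omega>" and lt: "measure lebesgue (hsection \<Omega> t) < \<eta>" and eta: "0 < \<eta>"
  shows "\<exists>U K. open U \<and> t \<in> U \<and> compact K \<and> measure lebesgue K < \<eta> \<and>
           (\<forall>s\<in>U. hsection \<Omega> s \<subseteq> K)"
proof (cases "t \<in> snd ` \<Omega>")
  case False
  have "compact (snd ` \<Omega>)" using cpt by (intro compact_continuous_image continuous_intros)
  hence "open (- snd ` \<Omega>)" by (simp add: compact_imp_closed open_Compl)
  moreover have "\<forall>s\<in>- snd ` \<Omega>. hsection \<Omega> s \<subseteq> {}" unfolding hsection_def by force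
  ultimately show ?thesis using False eta by (intro exI[of _ "- snd ` \<Omega>"] exI[of _ "{}"]) auto
next
  case True
  define St where "St = hsection \<Omega> t"
  have Stc: "compact St" unfolding St_def by (rule hsection_compact[OF cpt])
  have Stne: "St \<noteq> {}" using True unfolding St_def hsection_def by force
  define A where "A n = {x. infdist x St \<le> 1 / (real n + 1)}" for n
  have Acl: "closed (A n)" for n unfolding A_def
    by (intro closed_Collect_le continuous_intros)
  have Abd: "bounded (A n)" for n
  proof -
    obtain r where r: "\<forall>y\<in>St. norm y \<le> r" using Stc compact_imp_bounded bounded_iff by metis
    have "A n \<subseteq> cball 0 (r + 1)"
    proof
      fix x assume "x \<in> A n"
      have d: "infdist x St \<le> 1"
      proof -
        have "1 / (real n + 1) \<le> 1" by simp
        moreover have "infdist x St \<le> 1 / (real n + 1)" using \<open>x \<in> A n\<close> by (simp add: A_def)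
        ultimately show ?thesis by linarith
      qed
      obtain y where y: "y \<in> St" "infdist x St = dist x y"
        using infdist_attains_inf[OF compact_imp_closed[OF Stc] Stne] by metis
      have "norm x \<le> norm y + dist x y" using norm_triangle_sub[of x y] by (simp add: dist_norm)
      thus "x \<in> cball 0 (r+1)" using r y d by auto
    qed
    thus ?thesis by (meson bounded_cball bounded_subset)
  qed
  have Acpt: "compact (A n)" for n using Acl Abd compact_eq_bounded_closed by blast
  have dec: "decseq A"
  proof (rule decseq_SucI)
    fix n
    have "1 / (real (Suc n) + 1) \<le> 1 / (real n + 1)" by (rule divide_left_mono) auto
    thus "A (Suc n) \<subseteq> A n" unfolding A_def by (auto simp del: of_nat_Suc)
  qed
  have int: "(\<Inter>i. A i) = St"
  proof
    show "(\<Inter>i. A i) \<subseteq> St"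
    proof
      fix x assume x: "x \<in> (\<Inter>i. A i)"
      have "infdist x St \<le> 0"
      proof (rule field_le_epsilon)
        fix e :: real assume "e > 0"
        then obtain n :: nat where n: "1 / (real n + 1) < e"
            using reals_Archimedean[OF \<open>e > 0\<close>] by (metis inverse_eq_divide of_nat_Suc add.commute)
        hence "infdist x St \<le> 1 / (real n + 1)" using x unfolding A_def by auto
        thus "infdist x St \<le> 0 + e" using n by simp
      qed
      hence "infdist x St = 0" using infdist_nonneg[of x St] by linarith
      thus "x \<in> St" using in_closed_iff_infdist_zero[OF compact_imp_closed[OF Stc] Stne] by simp
    qed
  next
    show "St \<subseteq> (\<Inter>i. A i)" unfolding A_def using infdist_zero by auto
  qed
  have "(\<lambda>n. measure lebesgue (A n)) \<longlonglongrightarrow> measure lebesgue (\<Inter>i. A i)"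
  proof (rule Lim_measure_decseq)
    show "range A \<subseteq> sets lebesgue" using Acpt lmeasurable_compact by (auto simp: fmeasurable_def)
    show "decseq A" by (rule dec)
    show "emeasure lebesgue (A i) \<noteq> \<infinity>" for i
      using fmeasurableD2[OF lmeasurable_compact[OF Acpt[of i]]] by simp
  qed
  hence "(\<lambda>n. measure lebesgue (A n)) \<longlonglongrightarrow> measure lebesgue St" using int by simp
  moreover have "measure lebesgue St < \<eta>" using lt St_def by simp
  ultimately have "eventually (\<lambda>n. measure lebesgue (A n) < \<eta>) sequentially"
    by (rule order_tendstoD(2))
  then obtain n where n: "measure lebesgue (A n) < \<eta>" by (meson eventually_sequentially order_refl)
  define e where "e = 1 / (real n + 1)"
  have e: "e > 0" unfolding e_def by simp
  define C where "C = \<Omega> \<inter> {p. e \<le> infdist (fst p) St}"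
  have Ccl: "closed {p::'a\<times>real. e \<le> infdist (fst p) St}"
    by (intro closed_Collect_le continuous_intros)
  have "compact C" unfolding C_def using Ccl cpt by (simp add: compact_Int_closed)
  hence "compact (snd ` C)" by (intro compact_continuous_image continuous_intros)
  hence opn: "open (- snd ` C)" by (simp add: compact_imp_closed open_Compl)
  have tin: "t \<in> - snd ` C"
  proof
    assume "t \<in> snd ` C"
    then obtain x where "(x,t) \<in> \<Omega>" "e \<le> infdist x St" unfolding C_def by force
    moreover have "x \<in> St" using \<open>(x,t) \<in> \<Omega>\<close> unfolding St_def hsection_def by simp
    ultimately show False using e infdist_zero by (metis not_le)
  qed
  have sub: "\<forall>s\<in>- snd ` C. hsection \<Omega> s \<subseteq> A n"
  proof (intro ballI subsetI)
    fix s x assume s: "s \<in> - snd ` C" and x: "x \<in> hsection \<Omega> s"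
    hence "(x,s) \<in> \<Omega>" unfolding hsection_def by simp
    hence "(x,s) \<notin> C" using s by force
    hence "infdist x St < e" using \<open>(x,s) \<in> \<Omega>\<close> unfolding C_def by auto
    thus "x \<in> A n" unfolding A_def e_def by simp
  qed
  show ?thesis using opn tin sub Acpt n by blast
qed

theorem proposition3p10:
  fixes \<Omega> :: "((real ^ 'n) \<times> real) set" and \<eta> :: real and \<Lambda> :: "(real ^ 'n) set"
  assumes "convex \<Omega>" and "compact \<Omega>"
    and "\<eta> > (SUP t. measure lebesgue (hsection \<Omega> t))"
    and "universal_sampling \<eta> \<Lambda>"
  shows "\<exists>A B. 0 < A \<and> A \<le> B \<and> (\<forall>t. stable_sampling_bounds \<Lambda> (hsection \<Omega> t) A B)"
proof -
  note cpt = assms(2)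
  have us: "\<And>S. compact S \<Longrightarrow> measure lebesgue S < \<eta> \<Longrightarrow> stable_sampling \<Lambda> S"
    using assms(4) unfolding universal_sampling_def by blast
  have fc: "compact (fst ` \<Omega>)" using cpt by (intro compact_continuous_image continuous_intros)
  have le: "measure lebesgue (hsection \<Omega> t) \<le> measure lebesgue (fst ` \<Omega>)" for t
  proof (rule measure_mono_fmeasurable)
    show "hsection \<Omega> t \<subseteq> fst ` \<Omega>" unfolding hsection_def by force
    show "hsection \<Omega> t \<in> sets lebesgue"
      using lmeasurable_compact[OF hsection_compact[OF cpt]] by blast
    show "fst ` \<Omega> \<in> lmeasurable" by (rule lmeasurable_compact[OF fc])
  qed
  have bdd: "bdd_above (range (\<lambda>t. measure lebesgue (hsection \<Omega> t)))"
    using le by (intro bdd_aboveI) auto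
  have lt: "measure lebesgue (hsection \<Omega> t) < \<eta>" for t
    using cSUP_upper[OF UNIV_I bdd, of t] assms(3) by linarith
  have eta: "0 < \<eta>" using lt[of 0] measure_nonneg[of lebesgue "hsection \<Omega> 0"] by linarith
  have "\<forall>t. \<exists>U K. open U \<and> t \<in> U \<and> compact K \<and> measure lebesgue K < \<eta> \<and>
           (\<forall>s\<in>U. hsection \<Omega> s \<subseteq> K)"
    using local_cover[OF cpt lt eta] by blast
  then obtain U K where UK: "\<And>t. open (U t) \<and> t \<in> U t \<and> compact (K t) \<and> measure lebesgue (K t) < \<eta> \<and>
           (\<forall>s\<in>U t. hsection \<Omega> s \<subseteq> K t)" by metis
  have "\<forall>t. \<exists>a b. 0 < a \<and> a \<le> b \<and> stable_sampling_bounds \<Lambda> (K t) a b"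
    using us UK unfolding stable_sampling_def by blast
  then obtain AA BB where AB: "\<And>t. 0 < AA t \<and> AA t \<le> BB t \<and> stable_sampling_bounds \<Lambda> (K t) (AA t) (BB t)"
    by metis
  have "stable_sampling \<Lambda> {}" using us eta by simp
  then obtain a0 b0 where ab0: "0 < a0" "a0 \<le> b0" "stable_sampling_bounds \<Lambda> {} a0 b0"
    unfolding stable_sampling_def by blast
  have "compact (snd ` \<Omega>)" using cpt by (intro compact_continuous_image continuous_intros)
  moreover have "snd ` \<Omega> \<subseteq> (\<Union>t\<in>snd ` \<Omega>. U t)" using UK by blast
  ultimately obtain T where T: "T \<subseteq> snd ` \<Omega>" "finite T" "snd ` \<Omega> \<subseteq> (\<Union>t\<in>T. U t)"
    using compactE_image[of "snd ` \<Omega>" "snd ` \<Omega>" U] UK by metis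
  define A where "A = Min (insert a0 (AA ` T))"
  define B where "B = Max (insert b0 (BB ` T))"
  have Apos: "0 < A" unfolding A_def using T(2) ab0(1) AB by (subst Min_gr_iff) auto
  have Aa0: "A \<le> a0" unfolding A_def using T(2) by simp
  have AAt: "t \<in> T \<Longrightarrow> A \<le> AA t" for t unfolding A_def using T(2) by simp
  have Bb0: "b0 \<le> B" unfolding B_def using T(2) by simp
  have BBt: "t \<in> T \<Longrightarrow> BB t \<le> B" for t unfolding B_def using T(2) by simp
  have "\<forall>s. stable_sampling_bounds \<Lambda> (hsection \<Omega> s) A B"
  proof
    fix s
    show "stable_sampling_bounds \<Lambda> (hsection \<Omega> s) A B"
    proof (cases "s \<in> snd ` \<Omega>")
      case True
      then obtain t where t: "t \<in> T" "s \<in> U t" using T(3) by blast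
      hence "hsection \<Omega> s \<subseteq> K t" using UK by blast
      thus ?thesis using ssb_mono[of \<Lambda> "K t" "AA t" "BB t" "hsection \<Omega> s" A B] AB AAt BBt t Apos
        by auto
    next
      case False
      hence "hsection \<Omega> s = {}" unfolding hsection_def by force
      thus ?thesis using ssb_mono[OF ab0(3), of "hsection \<Omega> s" A B] Aa0 Bb0 Apos by auto
    qed
  qed
  moreover have "A \<le> B" using Aa0 ab0(2) Bb0 by linarith
  ultimately show ?thesis using Apos by blast
qed

end
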